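(* Let $1\le l\le r$ and write $I^{[l]}(z)=\sum_{d}I^{[l]}_{d_1,\dots,d_n}z_1^{d_1}\cdots z_n^{d_n}$ with $I^{[l]}_{d_1,\dots,d_n}\in\mathbb{F}_p^n$, the sum over $(d_1,\dots,d_n)\in\mathbb{Z}_{\ge0}^n$. Put $\delta_l=\sum_{j=1}^nM_j-lp$. Then $I^{[l]}_{d_1,\dots,d_n}\ne0$ if and only if $\sum_id_i=\delta_l$ and $d_i\le M_i$ for all $i$; moreover $$I^{[l]}_{d_1,\dots,d_n}=(-1)^{\delta_l}\prod_{j=1}^n\binom{M_j}{d_j}\Big(1-\frac{d_1}{M_1},\dots,1-\frac{d_n}{M_n}\Big),$$ and, writing $I^{[l]}_{d_1,\dots,d_n}=(I_{d;1},\dots,I_{d;n})$, we have $\sum_im_iI_{d;i}=\sum_iM_iI_{d;i}=0$ in $\mathbb{F}_p$.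
   Context: $p,q$ are primes, $n$ a positive integer with $p>n\ge2$, $p>q$; $m_1,\dots,m_n$ are positive integers $<q$, and $M_i$ is the least positive integer with $M_i\equiv -m_iq^{-1}\pmod p$ (in formulas over $\mathbb{F}_p$ its residue). With $\Phi_p(x,z)=\prod_i(x-z_i)^{M_i}$, $I^{[l]}(z)\in\mathbb{F}_p[z_1,\dots,z_n]^n$ is the coefficient of $x^{lp-1}$ in $(\Phi_p/(x-z_1),\dots,\Phi_p/(x-z_n))$, and $r=\lfloor\sum_iM_i/p\rfloor$. *)

theory Defs
  imports "HOL-Library.Poly_Mapping" "HOL-Computational_Algebra.Polynomial"
          "HOL-Number_Theory.Number_Theory" "Berlekamp_Zassenhaus.Finite_Field"
begin

text \<open>Multivariate polynomials over a ring R in variables z_0, z_1, ... :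
  finitely supported maps from monomials (exponent vectors) to coefficients.\<close>
type_synonym 'a mpoly = "(nat \<Rightarrow>\<^sub>0 nat) \<Rightarrow>\<^sub>0 'a"

definition zvar :: "nat \<Rightarrow> 'a::comm_ring_1 mpoly" where
  "zvar i = Poly_Mapping.single (Poly_Mapping.single i 1) 1"

definition Mexp :: "'p::prime_card itself \<Rightarrow> nat \<Rightarrow> nat \<Rightarrow> nat" where
  "Mexp _ q m = (LEAST M. 0 < M \<and>
      (of_nat M :: 'p mod_ring) = - (of_nat m) * inverse (of_nat q))"

definition xlin :: "nat \<Rightarrow> 'a::comm_ring_1 mpoly poly" where
  "xlin i = [: - zvar i, 1 :]"

definition Phi :: "nat \<Rightarrow> (nat \<Rightarrow> nat) \<Rightarrow> 'a::comm_ring_1 mpoly poly" where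
  "Phi n M = (\<Prod>j<n. xlin j ^ M j)"

text \<open>Phi_p/(x - z_i), written out as the exact quotient (M_i \<ge> 1).\<close>
definition Phi_div :: "nat \<Rightarrow> (nat \<Rightarrow> nat) \<Rightarrow> nat \<Rightarrow> 'a::comm_ring_1 mpoly poly" where
  "Phi_div n M i = xlin i ^ (M i - 1) * (\<Prod>j\<in>{..<n} - {i}. xlin j ^ M j)"

text \<open>i-th component of I^[l](z): coefficient of x^(l p - 1) in Phi_p/(x - z_i).\<close>
definition Icomp :: "nat \<Rightarrow> (nat \<Rightarrow> nat) \<Rightarrow> nat \<Rightarrow> nat \<Rightarrow> nat \<Rightarrow> 'a::comm_ring_1 mpoly" where
  "Icomp n M p l i = coeff (Phi_div n M i) (l * p - 1)"

end

theory Submission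
  imports Defs
begin

lemma neg_zvar_power: "(- zvar j :: 'a::comm_ring_1 mpoly) ^ t = Poly_Mapping.single (Poly_Mapping.single j t) ((-1) ^ t)"
proof (induction t)
  case 0
  then show ?case by simp
next
  case (Suc t)
  have "(- zvar j :: 'a mpoly) ^ Suc t = Poly_Mapping.single (Poly_Mapping.single j 1) (-1) * Poly_Mapping.single (Poly_Mapping.single j t) ((-1) ^ t)"
    using Suc by (simp add: zvar_def single_uminus)
  also have "\<dots> = Poly_Mapping.single (Poly_Mapping.single j (Suc t)) ((-1) ^ Suc t)"
    by (simp add: mult_single single_add[symmetric])
  finally show ?case .
qed

lemma of_nat_mult_single: "(of_nat c :: 'a::comm_ring_1 mpoly) * Poly_Mapping.single m a = Poly_Mapping.single m (of_nat c * a)"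
  by (simp add: single_of_nat[symmetric] mult_single del: single_of_nat)

lemma xlin_power: "(xlin j :: 'a::comm_ring_1 mpoly poly) ^ e =
  (\<Sum>t\<le>e. monom (Poly_Mapping.single (Poly_Mapping.single j t) (of_nat (e choose t) * (-1)^t)) (e - t))"
proof -
  have "xlin j = [:- (zvar j :: 'a mpoly):] + (monom 1 1 :: 'a mpoly poly)"
    by (simp add: xlin_def monom_altdef)
  hence "(xlin j :: 'a mpoly poly) ^ e = (\<Sum>t\<le>e. of_nat (e choose t) * [:- (zvar j :: 'a mpoly):] ^ t * (monom 1 1) ^ (e - t))"
    by (simp add: binomial_ring)
  also have "\<dots> = (\<Sum>t\<le>e. monom (Poly_Mapping.single (Poly_Mapping.single j t) (of_nat (e choose t) * (-1)^t)) (e - t))"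
  proof (rule sum.cong[OF refl])
    fix t
    have A: "[:- (zvar j :: 'a mpoly):] ^ t = [:Poly_Mapping.single (Poly_Mapping.single j t) ((-1::'a) ^ t):]"
    proof -
      have "[:- (zvar j :: 'a mpoly):] ^ t = [:(- zvar j :: 'a mpoly) ^ t:]" by (induction t) auto
      thus ?thesis by (simp only: neg_zvar_power)
    qed
    show "of_nat (e choose t) * [:- (zvar j :: 'a mpoly):] ^ t * (monom 1 1) ^ (e - t) = monom (Poly_Mapping.single (Poly_Mapping.single j t) (of_nat (e choose t) * (-1)^t)) (e - t)"
    proof -
      have "of_nat (e choose t) * [:- (zvar j :: 'a mpoly):] ^ t * (monom 1 1) ^ (e - t) = [:of_nat (e choose t):] * [:Poly_Mapping.single (Poly_Mapping.single j t) ((-1::'a) ^ t):] * monom 1 (e - t)"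
        by (simp only: A monom_power of_nat_poly mult_1 power_one)
      also have "\<dots> = monom (Poly_Mapping.single (Poly_Mapping.single j t) (of_nat (e choose t) * (-1)^t)) (e - t)"
        by (simp add: mult_pCons_left of_nat_mult_single smult_monom mult.commute[of _ "of_nat _"])
      finally show ?thesis .
    qed
  qed
  finally show ?thesis .
qed

lemma prod_monom_single:
  assumes "finite S"
  shows "(\<Prod>j\<in>S. monom (Poly_Mapping.single (a j) (c j)) (k j)) =
    (monom (Poly_Mapping.single (\<Sum>j\<in>S. a j) (\<Prod>j\<in>S. c j)) (\<Sum>j\<in>S. k j) :: 'a::comm_ring_1 mpoly poly)"
  using assms
proof (induction S rule: finite_induct)
  case empty
  then show ?case by (simp add: monom_eq_1)
next
  case (insert x S)
  then show ?case by (simp add: mult_monom mult_single)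
qed

lemma expand_prod:
  assumes "finite S"
  shows "(\<Prod>j\<in>S. xlin j ^ E j :: 'a::comm_ring_1 mpoly poly) =
    (\<Sum>g\<in>PiE S (\<lambda>j. {..E j}). monom (Poly_Mapping.single (\<Sum>j\<in>S. Poly_Mapping.single j (g j))
        (\<Prod>j\<in>S. of_nat (E j choose g j) * (-1)^(g j))) (\<Sum>j\<in>S. E j - g j))"
proof -
  have "(\<Prod>j\<in>S. xlin j ^ E j :: 'a mpoly poly) = (\<Prod>j\<in>S. \<Sum>t\<le>E j. monom (Poly_Mapping.single (Poly_Mapping.single j t) (of_nat (E j choose t) * (-1)^t)) (E j - t))"
    by (simp only: xlin_power)
  also have "\<dots> = (\<Sum>g\<in>PiE S (\<lambda>j. {..E j}). \<Prod>j\<in>S. monom (Poly_Mapping.single (Poly_Mapping.single j (g j)) (of_nat (E j choose g j) * (-1)^(g j))) (E j - g j))"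
    by (rule prod_sum_PiE) (use assms in auto)
  also have "\<dots> = (\<Sum>g\<in>PiE S (\<lambda>j. {..E j}). monom (Poly_Mapping.single (\<Sum>j\<in>S. Poly_Mapping.single j (g j))
        (\<Prod>j\<in>S. of_nat (E j choose g j) * (-1)^(g j))) (\<Sum>j\<in>S. E j - g j))"
    by (rule sum.cong[OF refl], rule prod_monom_single[OF assms])
  finally show ?thesis .
qed

lemma lookup_sum_single:
  assumes "finite S"
  shows "Poly_Mapping.lookup (\<Sum>j\<in>S. Poly_Mapping.single j (g j)) i = (if i \<in> S then g i else (0::nat))"
  using assms by (simp add: lookup_sum lookup_single when_def)

lemma coeff_lookup:
  assumes "finite S" and "Poly_Mapping.keys d \<subseteq> S"
  shows "Poly_Mapping.lookup (coeff (\<Prod>j\<in>S. xlin j ^ E j :: 'a::comm_ring_1 mpoly poly) k) d =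
    (if (\<forall>j\<in>S. Poly_Mapping.lookup d j \<le> E j) \<and> (\<Sum>j\<in>S. E j - Poly_Mapping.lookup d j) = k
     then \<Prod>j\<in>S. of_nat (E j choose Poly_Mapping.lookup d j) * (-1)^(Poly_Mapping.lookup d j) else 0)"
proof -
  define r where "r = restrict (Poly_Mapping.lookup d) S"
  define P where "P = PiE S (\<lambda>j. {..E j})"
  define F where "F = (\<lambda>g. if (\<Sum>j\<in>S. E j - g j) = k then (\<Prod>j\<in>S. of_nat (E j choose g j) * (-1::'a)^(g j)) else 0)"
  have key: "((\<Sum>j\<in>S. Poly_Mapping.single j (g j)) = d) = (g = r)" if g: "g \<in> P" for g
  proof
    assume h: "(\<Sum>j\<in>S. Poly_Mapping.single j (g j)) = d"
    show "g = r"
    proof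
      fix i
      show "g i = r i"
      proof (cases "i \<in> S")
        case True
        then show ?thesis using lookup_sum_single[OF assms(1), of g i] h by (simp add: r_def)
      next
        case False
        then show ?thesis using g by (simp add: r_def P_def PiE_def extensional_def)
      qed
    qed
  next
    assume h: "g = r"
    show "(\<Sum>j\<in>S. Poly_Mapping.single j (g j)) = d"
    proof (rule poly_mapping_eqI)
      fix i
      show "Poly_Mapping.lookup (\<Sum>j\<in>S. Poly_Mapping.single j (g j)) i = Poly_Mapping.lookup d i"
        using assms(2) by (auto simp: lookup_sum_single[OF assms(1)] h r_def in_keys_iff)
    qed
  qed
  have "Poly_Mapping.lookup (coeff (\<Prod>j\<in>S. xlin j ^ E j :: 'a mpoly poly) k) d =
     (\<Sum>g\<in>P. if g = r then F g else 0)"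
    unfolding expand_prod[OF assms(1)] coeff_sum lookup_sum P_def[symmetric]
    by (rule sum.cong[OF refl]) (auto simp: coeff_monom lookup_single when_def F_def key)
  also have "\<dots> = (if r \<in> P then F r else 0)"
    using assms(1) by (simp add: sum.delta P_def finite_PiE)
  also have "\<dots> = (if (\<forall>j\<in>S. Poly_Mapping.lookup d j \<le> E j) \<and> (\<Sum>j\<in>S. E j - Poly_Mapping.lookup d j) = k
     then \<Prod>j\<in>S. of_nat (E j choose Poly_Mapping.lookup d j) * (-1)^(Poly_Mapping.lookup d j) else 0)"
  proof -
    have rP: "(r \<in> P) = (\<forall>j\<in>S. Poly_Mapping.lookup d j \<le> E j)"
      by (auto simp: r_def P_def restrict_PiE_iff)
    have s1: "(\<Sum>j\<in>S. E j - r j) = (\<Sum>j\<in>S. E j - Poly_Mapping.lookup d j)"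
      by (rule sum.cong) (auto simp: r_def)
    have s2: "(\<Prod>j\<in>S. of_nat (E j choose r j) * (-1::'a)^(r j)) = (\<Prod>j\<in>S. of_nat (E j choose Poly_Mapping.lookup d j) * (-1)^(Poly_Mapping.lookup d j))"
      by (rule prod.cong) (auto simp: r_def)
    show ?thesis unfolding rP F_def s1 s2 by auto
  qed
  finally show ?thesis .
qed

lemma of_nat_mod_ring_nz:
  assumes "0 < k" "k < CARD('p::prime_card)"
  shows "(of_nat k :: 'p mod_ring) \<noteq> 0"
proof
  assume "(of_nat k :: 'p mod_ring) = 0"
  hence "CARD('p) dvd k" by (rule of_nat_0_mod_ring_dvd)
  hence "CARD('p) \<le> k" using assms(1) by (rule dvd_imp_le)
  thus False using assms(2) by simp
qed

lemma choose_mod_ring_nz: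
  assumes "M < CARD('p::prime_card)" "d \<le> M"
  shows "(of_nat (M choose d) :: 'p mod_ring) \<noteq> 0"
proof
  assume "(of_nat (M choose d) :: 'p mod_ring) = 0"
  hence "CARD('p) dvd (M choose d)" by (rule of_nat_0_mod_ring_dvd)
  hence "CARD('p) dvd fact M"
    using binomial_fact_lemma[OF assms(2)] by (metis dvd_mult)
  hence "CARD('p) \<le> M" using prime_card[where 'a='p] by (simp add: prime_dvd_fact_iff)
  thus False using assms(1) by simp
qed

lemma Mexp_props:
  assumes "CARD('p::prime_card) = p" "0 < m" "m < p" "0 < q" "q < p"
  shows "0 < Mexp TYPE('p) q m \<and> Mexp TYPE('p) q m < p \<and>
    (of_nat (Mexp TYPE('p) q m) :: 'p mod_ring) = - of_nat m * inverse (of_nat q)"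
proof -
  define x where "x = (- of_nat m * inverse (of_nat q) :: 'p mod_ring)"
  have m0: "(of_nat m :: 'p mod_ring) \<noteq> 0" using of_nat_mod_ring_nz[of m, where 'p='p] assms by simp
  have q0: "(of_nat q :: 'p mod_ring) \<noteq> 0" using of_nat_mod_ring_nz[of q, where 'p='p] assms by simp
  have x0: "x \<noteq> 0" using m0 q0 by (simp add: x_def)
  obtain t where t: "t < p" "x = of_nat t" using surj_of_nat_mod_ring[of x] assms(1) by auto
  have t0: "0 < t" using t x0 by (cases t) auto
  have P: "0 < t \<and> (of_nat t :: 'p mod_ring) = x" using t t0 by simp
  have "0 < Mexp TYPE('p) q m \<and> (of_nat (Mexp TYPE('p) q m) :: 'p mod_ring) = x"
    unfolding Mexp_def x_def[symmetric] by (rule LeastI[of _ t], rule P)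
  moreover have "Mexp TYPE('p) q m \<le> t"
    unfolding Mexp_def x_def[symmetric] by (rule Least_le, rule P)
  ultimately show ?thesis using t by (simp add: x_def)
qed

lemma choose_pred_field:
  assumes "(of_nat M :: 'a::field) \<noteq> 0" "d \<le> M"
  shows "(of_nat (M - 1 choose d) :: 'a) = of_nat (M choose d) * (1 - of_nat d / of_nat M)"
proof -
  have "(of_nat ((M - d) * (M choose d)) :: 'a) = of_nat (M * ((M - 1) choose d))"
    by (simp only: binomial_absorb_comp)
  hence "(of_nat M - of_nat d) * of_nat (M choose d) = (of_nat M * of_nat ((M - 1) choose d) :: 'a)"
    using assms(2) by (simp add: of_nat_diff)
  thus ?thesis using assms(1) by (simp add: field_simps)
qed

lemma arith_cond:
  fixes M d :: "nat \<Rightarrow> nat"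
  assumes "finite S" "i \<in> S" "0 < M i" "1 \<le> L" "L \<le> (\<Sum>j\<in>S. M j)"
  shows "((\<forall>j\<in>S. d j \<le> (M(i := M i - 1)) j) \<and> (\<Sum>j\<in>S. (M(i := M i - 1)) j - d j) = L - 1) \<longleftrightarrow>
    (((\<Sum>j\<in>S. d j) = (\<Sum>j\<in>S. M j) - L \<and> (\<forall>j\<in>S. d j \<le> M j)) \<and> d i < M i)"
proof -
  define E where "E = M(i := M i - 1)"
  have le_iff: "(\<forall>j\<in>S. d j \<le> E j) \<longleftrightarrow> (\<forall>j\<in>S. d j \<le> M j) \<and> d i < M i"
  proof
    assume h: "\<forall>j\<in>S. d j \<le> E j"
    have "d i < M i" using h assms(2,3) by (force simp: E_def)
    moreover have "\<forall>j\<in>S. d j \<le> M j"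
    proof
      fix j assume "j \<in> S"
      then show "d j \<le> M j" using h by (cases "j = i") (force simp: E_def)+
    qed
    ultimately show "(\<forall>j\<in>S. d j \<le> M j) \<and> d i < M i" by blast
  next
    assume h: "(\<forall>j\<in>S. d j \<le> M j) \<and> d i < M i"
    show "\<forall>j\<in>S. d j \<le> E j"
    proof
      fix j assume "j \<in> S"
      then show "d j \<le> E j" using h by (cases "j = i") (auto simp: E_def)
    qed
  qed
  have sE: "(\<Sum>j\<in>S. E j) + 1 = (\<Sum>j\<in>S. M j)"
  proof -
    have "(\<Sum>j\<in>S. E j) = E i + (\<Sum>j\<in>S - {i}. E j)" using assms(1,2) by (simp add: sum.remove)
    also have "(\<Sum>j\<in>S - {i}. E j) = (\<Sum>j\<in>S - {i}. M j)" by (rule sum.cong) (auto simp: E_def)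
    finally show ?thesis using assms(1,2,3) by (simp add: sum.remove E_def)
  qed
  show ?thesis
  proof (cases "\<forall>j\<in>S. d j \<le> E j")
    case True
    have sd: "(\<Sum>j\<in>S. d j) \<le> (\<Sum>j\<in>S. E j)" using True by (simp add: sum_mono)
    have "(\<Sum>j\<in>S. E j - d j) = (\<Sum>j\<in>S. E j) - (\<Sum>j\<in>S. d j)"
      using True by (simp add: sum_subtractf_nat)
    have "(\<Sum>j\<in>S. E j - d j) = L - 1 \<longleftrightarrow> (\<Sum>j\<in>S. d j) = (\<Sum>j\<in>S. M j) - L"
      using sE sd assms(4,5) \<open>(\<Sum>j\<in>S. E j - d j) = (\<Sum>j\<in>S. E j) - (\<Sum>j\<in>S. d j)\<close> by linarith
    then show ?thesis using True le_iff unfolding E_def[symmetric] by blast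
  next
    case False
    then show ?thesis using le_iff unfolding E_def[symmetric] by blast
  qed
qed

theorem lemma3p1:
  fixes p q n l :: nat and m :: "nat \<Rightarrow> nat" and d :: "nat \<Rightarrow>\<^sub>0 nat"
    and TYPE_p :: "'p::prime_card itself"
  defines "M \<equiv> (\<lambda>i. Mexp TYPE('p) q (m i))"
  defines "r \<equiv> (\<Sum>i<n. M i) div p"
  defines "\<delta> \<equiv> (\<Sum>j<n. M j) - l * p"
  defines "I \<equiv> (\<lambda>i. Icomp n M p l i :: 'p mod_ring mpoly)"
  assumes "CARD('p) = p" and "prime p" and "prime q"
    and "2 \<le> n" and "n < p" and "q < p"
    and "\<And>i. i < n \<Longrightarrow> 0 < m i \<and> m i < q"
    and "1 \<le> l" and "l \<le> r"
    and "Poly_Mapping.keys d \<subseteq> {..<n}"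
  shows "((\<exists>i<n. Poly_Mapping.lookup (I i) d \<noteq> 0) \<longleftrightarrow>
          ((\<Sum>i<n. Poly_Mapping.lookup d i) = \<delta> \<and> (\<forall>i<n. Poly_Mapping.lookup d i \<le> M i)))
    \<and> (((\<Sum>i<n. Poly_Mapping.lookup d i) = \<delta> \<and> (\<forall>i<n. Poly_Mapping.lookup d i \<le> M i)) \<longrightarrow>
          (\<forall>i<n. Poly_Mapping.lookup (I i) d =
             (-1) ^ \<delta> * (\<Prod>j<n. of_nat (M j choose Poly_Mapping.lookup d j))
               * (1 - of_nat (Poly_Mapping.lookup d i) / of_nat (M i))))
    \<and> (\<Sum>i<n. of_nat (m i) * Poly_Mapping.lookup (I i) d) = 0
    \<and> (\<Sum>i<n. of_nat (M i) * Poly_Mapping.lookup (I i) d) = 0"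
proof -
  note CARD = assms(5)
  have p2: "2 \<le> p" using assms(6) by (simp add: prime_ge_2_nat)
  have q0: "0 < q" using assms(7) by (simp add: prime_gt_0_nat)
  have Mp: "0 < M i \<and> M i < p \<and> (of_nat (M i) :: 'p mod_ring) = - of_nat (m i) * inverse (of_nat q)"
    if "i < n" for i
    using Mexp_props[OF CARD, of "m i" q] assms(10) assms(11)[of i] q0 that unfolding M_def by auto
  have MF0: "(of_nat (M i) :: 'p mod_ring) \<noteq> 0" if "i < n" for i
    using of_nat_mod_ring_nz[of "M i", where 'p='p] Mp[OF that] CARD by auto
  have qF0: "(of_nat q :: 'p mod_ring) \<noteq> 0"
    using of_nat_mod_ring_nz[of q, where 'p='p] q0 assms(10) CARD by auto
  have mq: "(of_nat (m i) :: 'p mod_ring) = - of_nat q * of_nat (M i)" if "i < n" for i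
    using Mp[OF that] qF0 by (simp add: field_simps)
  have lp1: "1 \<le> l * p" using assms(12) p2 by (simp add: Suc_le_eq)
  have lp2: "l * p \<le> (\<Sum>i<n. M i)"
  proof -
    have "l * p \<le> ((\<Sum>i<n. M i) div p) * p" using assms(13) unfolding r_def by (rule mult_le_mono1)
    also have "\<dots> \<le> (\<Sum>i<n. M i)" by (rule div_times_less_eq_dividend)
    finally show ?thesis .
  qed
  define E where "E i = M(i := M i - 1)" for i
  have Ival: "Poly_Mapping.lookup (I i) d =
     (if (\<forall>j\<in>{..<n}. Poly_Mapping.lookup d j \<le> E i j) \<and> (\<Sum>j\<in>{..<n}. E i j - Poly_Mapping.lookup d j) = l * p - 1
      then \<Prod>j\<in>{..<n}. of_nat (E i j choose Poly_Mapping.lookup d j) * (-1)^(Poly_Mapping.lookup d j) else 0)"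
    if i: "i < n" for i
  proof -
    have "(\<Prod>j\<in>{..<n}. xlin j ^ E i j :: 'p mod_ring mpoly poly) = xlin i ^ E i i * (\<Prod>j\<in>{..<n} - {i}. xlin j ^ E i j)"
      using i by (simp add: prod.remove)
    also have "(\<Prod>j\<in>{..<n} - {i}. xlin j ^ E i j :: 'p mod_ring mpoly poly) = (\<Prod>j\<in>{..<n} - {i}. xlin j ^ M j)"
      by (rule prod.cong) (auto simp: E_def)
    finally have "Phi_div n M i = (\<Prod>j\<in>{..<n}. xlin j ^ E i j :: 'p mod_ring mpoly poly)"
      unfolding Phi_div_def by (simp add: E_def)
    hence "I i = coeff (\<Prod>j\<in>{..<n}. xlin j ^ E i j :: 'p mod_ring mpoly poly) (l * p - 1)"
      unfolding I_def Icomp_def by simp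
    thus ?thesis using coeff_lookup[OF _ assms(14), of "E i" "l * p - 1"] by simp
  qed
  define cond where "cond = ((\<Sum>i<n. Poly_Mapping.lookup d i) = \<delta> \<and> (\<forall>i<n. Poly_Mapping.lookup d i \<le> M i))"
  define V where "V i = (-1) ^ \<delta> * (\<Prod>j<n. of_nat (M j choose Poly_Mapping.lookup d j))
               * (1 - of_nat (Poly_Mapping.lookup d i) / of_nat (M i) :: 'p mod_ring)" for i
  have ac: "((\<forall>j\<in>{..<n}. Poly_Mapping.lookup d j \<le> E i j) \<and> (\<Sum>j\<in>{..<n}. E i j - Poly_Mapping.lookup d j) = l * p - 1)
     \<longleftrightarrow> cond \<and> Poly_Mapping.lookup d i < M i" if i: "i < n" for i
    using arith_cond[of "{..<n}" i M "l * p" "Poly_Mapping.lookup d"] Mp[OF i] lp1 lp2 i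
    unfolding E_def cond_def \<delta>_def by auto
  have notcond: "Poly_Mapping.lookup (I i) d = 0" if "\<not> cond" "i < n" for i
    using Ival[OF that(2)] ac[OF that(2)] that(1) by metis
  have yescond: "Poly_Mapping.lookup (I i) d = V i" if c: "cond" and i: "i < n" for i
  proof (cases "Poly_Mapping.lookup d i < M i")
    case True
    let ?d = "Poly_Mapping.lookup d"
    have "Poly_Mapping.lookup (I i) d = (\<Prod>j\<in>{..<n}. of_nat (E i j choose ?d j) * (-1)^(?d j))"
      using Ival[OF i] ac[OF i] c True by simp
    also have "\<dots> = (\<Prod>j\<in>{..<n}. of_nat (E i j choose ?d j)) * (-1) ^ (\<Sum>j<n. ?d j)"
      by (simp add: prod.distrib power_sum)
    also have "(\<Sum>j<n. ?d j) = \<delta>" using c by (simp add: cond_def)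
    also have "(\<Prod>j\<in>{..<n}. of_nat (E i j choose ?d j) :: 'p mod_ring) =
       of_nat (M i - 1 choose ?d i) * (\<Prod>j\<in>{..<n} - {i}. of_nat (M j choose ?d j))"
    proof -
      have "(\<Prod>j\<in>{..<n}. of_nat (E i j choose ?d j) :: 'p mod_ring) =
        of_nat (E i i choose ?d i) * (\<Prod>j\<in>{..<n} - {i}. of_nat (E i j choose ?d j))"
        using i by (simp add: prod.remove)
      also have "(\<Prod>j\<in>{..<n} - {i}. of_nat (E i j choose ?d j) :: 'p mod_ring) = (\<Prod>j\<in>{..<n} - {i}. of_nat (M j choose ?d j))"
        by (rule prod.cong) (auto simp: E_def)
      finally show ?thesis by (simp add: E_def)
    qed
    also have "(of_nat (M i - 1 choose ?d i) :: 'p mod_ring) = of_nat (M i choose ?d i) * (1 - of_nat (?d i) / of_nat (M i))"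
      using choose_pred_field[OF MF0[OF i], of "?d i"] True by simp
    also have "(\<Prod>j<n. of_nat (M j choose ?d j) :: 'p mod_ring) = of_nat (M i choose ?d i) * (\<Prod>j\<in>{..<n} - {i}. of_nat (M j choose ?d j))"
      using i by (simp add: prod.remove)
    ultimately show ?thesis unfolding V_def by (simp add: algebra_simps)
  next
    case False
    hence "Poly_Mapping.lookup d i = M i" using c i by (simp add: cond_def le_antisym)
    moreover have "Poly_Mapping.lookup (I i) d = 0" using Ival[OF i] ac[OF i] False by metis
    ultimately show ?thesis unfolding V_def using MF0[OF i] by simp
  qed
  have sumMV: "(\<Sum>i<n. of_nat (M i) * V i) = 0" if c: "cond"
  proof -
    let ?d = "Poly_Mapping.lookup d"
    have D: "(\<Sum>i<n. ?d i) \<le> (\<Sum>i<n. M i)" using c by (simp add: cond_def \<delta>_def)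
    have "(\<Sum>i<n. of_nat (M i) * V i) = (-1) ^ \<delta> * (\<Prod>j<n. of_nat (M j choose ?d j)) *
        (\<Sum>i<n. of_nat (M i) * (1 - of_nat (?d i) / of_nat (M i)) :: 'p mod_ring)"
    proof -
      have "(\<Sum>i<n. of_nat (M i) * V i) = (\<Sum>i<n. ((-1) ^ \<delta> * (\<Prod>j<n. of_nat (M j choose ?d j))) *
        (of_nat (M i) * (1 - of_nat (?d i) / of_nat (M i)) :: 'p mod_ring))"
        by (rule sum.cong) (simp_all only: V_def mult_ac)
      thus ?thesis by (simp only: sum_distrib_left[symmetric])
    qed
    also have "(\<Sum>i<n. of_nat (M i) * (1 - of_nat (?d i) / of_nat (M i)) :: 'p mod_ring) = (\<Sum>i<n. of_nat (M i) - of_nat (?d i))"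
      by (rule sum.cong) (auto simp: MF0 field_simps)
    also have "\<dots> = of_nat (\<Sum>i<n. M i) - of_nat (\<Sum>i<n. ?d i)" by (simp add: sum_subtractf)
    also have "\<dots> = of_nat ((\<Sum>i<n. M i) - (\<Sum>i<n. ?d i))" using D by (simp add: of_nat_diff)
    also have "(\<Sum>i<n. M i) - (\<Sum>i<n. ?d i) = l * p" using c lp2 by (simp add: cond_def \<delta>_def)
    also have "(of_nat (l * p) :: 'p mod_ring) = 0" using CARD[symmetric] by simp
    finally show ?thesis by simp
  qed
  show ?thesis
  proof (cases cond)
    case False
    hence z: "\<forall>i<n. Poly_Mapping.lookup (I i) d = 0" using notcond by blast
    have s3: "(\<Sum>i<n. of_nat (m i) * Poly_Mapping.lookup (I i) d) = 0" using z by simp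
    have s4: "(\<Sum>i<n. of_nat (M i) * Poly_Mapping.lookup (I i) d) = 0" using z by simp
    have p1: "\<not> (\<exists>i<n. Poly_Mapping.lookup (I i) d \<noteq> 0)" using z by blast
    show ?thesis using False p1 s3 s4 unfolding cond_def by blast
  next
    case True
    let ?d = "Poly_Mapping.lookup d"
    have ex: "\<exists>i<n. ?d i < M i"
    proof (rule ccontr)
      assume "\<not> ?thesis"
      hence "\<forall>i<n. ?d i = M i" using True unfolding cond_def by (meson le_neq_implies_less)
      hence "(\<Sum>i<n. ?d i) = (\<Sum>i<n. M i)" by simp
      thus False using True lp1 lp2 unfolding cond_def \<delta>_def by linarith
    qed
    then obtain i where i: "i < n" "?d i < M i" by blast
    have "V i \<noteq> 0"
    proof -
      have "(\<Prod>j<n. of_nat (M j choose ?d j) :: 'p mod_ring) \<noteq> 0"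
      proof -
        have "(of_nat (M j choose ?d j) :: 'p mod_ring) \<noteq> 0" if j: "j < n" for j
          using choose_mod_ring_nz[of "M j" "?d j", where 'p='p] Mp[OF j] CARD True j by (simp add: cond_def)
        thus ?thesis by (simp add: prod_zero_iff)
      qed
      moreover have "(1 - of_nat (?d i) / of_nat (M i) :: 'p mod_ring) = of_nat (M i - ?d i) / of_nat (M i)"
        using MF0[OF i(1)] i(2) by (simp add: of_nat_diff field_simps)
      moreover have "(of_nat (M i - ?d i) :: 'p mod_ring) \<noteq> 0"
      proof (rule of_nat_mod_ring_nz)
        show "0 < M i - ?d i" using i(2) by simp
        show "M i - ?d i < CARD('p)" using Mp[OF i(1)] CARD by linarith
      qed
      ultimately show ?thesis unfolding V_def using MF0[OF i(1)] by simp
    qed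
    hence part1: "\<exists>i<n. Poly_Mapping.lookup (I i) d \<noteq> 0" using yescond[OF True i(1)] i(1) by auto
    have part4: "(\<Sum>i<n. of_nat (M i) * Poly_Mapping.lookup (I i) d) = 0"
      using sumMV[OF True] yescond[OF True] by simp
    have "(\<Sum>i<n. of_nat (m i) * Poly_Mapping.lookup (I i) d) = (\<Sum>i<n. - of_nat q * (of_nat (M i) * Poly_Mapping.lookup (I i) d))"
      by (rule sum.cong) (auto simp: mq)
    also have "\<dots> = - of_nat q * (\<Sum>i<n. of_nat (M i) * Poly_Mapping.lookup (I i) d)"
      by (simp add: sum_distrib_left)
    finally have part3: "(\<Sum>i<n. of_nat (m i) * Poly_Mapping.lookup (I i) d) = 0" using part4 by simp
    show ?thesis using part1 part3 part4 True yescond[OF True] V_def unfolding cond_def by simp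
  qed
qed

end
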